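(* Let $p>1$ and $k\ge2$. There exist $E>0$ and $C>0$ such that for all $\zeta_1<\zeta_2<\dots<\zeta_k$ with $\zeta_{j+1}-\zeta_j\ge E$ for $j=1,\dots,k-1$, all $\theta_1,\dots,\theta_k\in\mathbb R$, and all $i\in\{1,\dots,k\}$, $$\int_{-1}^1\kappa(d_i,y)\,|K(y)|^{p-2}\,dy\le C,\qquad\text{where } d_j=-\tanh\zeta_j,\quad K(y)=\sum_{j=1}^ke^{i\theta_j}\kappa(d_j,y).$$
   Context: $\kappa(d,y)=\kappa_0(1-d^2)^{\frac1{p-1}}(1+dy)^{-\frac2{p-1}}$ for $d,y\in(-1,1)$, with $\kappa_0=(\frac{2(p+1)}{(p-1)^2})^{\frac1{p-1}}$. (In the paper this is applied along the solution's modulation parameters, for $s$ large, when the soliton centers $\zeta_j(s)$ separate.) *)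

theory Defs
  imports "HOL-Analysis.Analysis"
begin

definition kappa0 :: "real \<Rightarrow> real" where
  "kappa0 p = (2 * (p + 1) / (p - 1)^2) powr (1 / (p - 1))"

definition kappa :: "real \<Rightarrow> real \<Rightarrow> real \<Rightarrow> real" where
  "kappa p d y = kappa0 p * (1 - d^2) powr (1 / (p - 1)) * (1 + d * y) powr (- 2 / (p - 1))"

definition epow :: "real \<Rightarrow> real \<Rightarrow> ennreal" where
  "epow x a = (if x = 0 then (if a < 0 then \<infinity> else if a = 0 then 1 else 0)
               else ennreal (x powr a))"

end

theory Submission
  imports Defs
begin


lemma cosh_le_exp_abs: "cosh (x::real) \<le> exp \<bar>x\<bar>"
proof -
  have a: "exp x \<le> exp \<bar>x\<bar>" and b: "exp (-x) \<le> exp \<bar>x\<bar>" by auto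
  from a b have "exp x + exp (-x) \<le> 2 * exp \<bar>x\<bar>" by linarith
  thus ?thesis unfolding cosh_field_def by simp
qed

lemma exp_abs_le_cosh: "exp \<bar>x\<bar> \<le> 2 * cosh (x::real)"
proof -
  have "exp \<bar>x\<bar> \<le> exp x + exp (-x)"
    by (cases "x \<ge> 0") (auto simp: add_increasing add_increasing2)
  thus ?thesis unfolding cosh_field_def by simp
qed

definition sol :: "real \<Rightarrow> real \<Rightarrow> real \<Rightarrow> real" where
  "sol a z x = cosh (x - z) powr (-a)"

lemma sol_pos: "sol a z x > 0" unfolding sol_def by simp

lemma sol_le1: assumes "a \<ge> 0" shows "sol a z x \<le> 1"
proof -
  have "1 \<le> cosh (x-z) powr a" using cosh_real_ge_1[of "x-z"] assms by (intro ge_one_powr_ge_zero) auto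
  thus ?thesis unfolding sol_def by (simp add: powr_minus inverse_le_1_iff)
qed

lemma sol_le: assumes "a \<ge> 0" shows "sol a z x \<le> 2 powr a * exp (-a*\<bar>x-z\<bar>)"
proof -
  have "cosh (x-z) powr (-a) \<le> (exp \<bar>x-z\<bar> / 2) powr (-a)"
    using exp_abs_le_cosh[of "x-z"] assms by (intro powr_mono2') auto
  also have "\<dots> = exp (-a * (\<bar>x-z\<bar> - ln 2))"
    by (simp add: powr_def ln_div)
  also have "\<dots> = 2 powr a * exp (-a*\<bar>x-z\<bar>)"
    by (simp add: powr_def algebra_simps flip: exp_add)
  finally show ?thesis unfolding sol_def .
qed

lemma sol_ge: assumes "a \<ge> 0" shows "exp (-a*\<bar>x-z\<bar>) \<le> sol a z x"
proof -
  have "exp (-a*\<bar>x-z\<bar>) = (exp \<bar>x-z\<bar>) powr (-a)" by (simp add: powr_def)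
  also have "\<dots> \<le> cosh (x-z) powr (-a)"
    using cosh_le_exp_abs[of "x-z"] assms by (intro powr_mono2') auto
  finally show ?thesis unfolding sol_def .
qed

lemma sol_ratio_le:
  assumes "a \<ge> 0" "\<bar>x - zj\<bar> \<ge> \<bar>x - zm\<bar> + D"
  shows "sol a zj x \<le> 2 powr a * exp (-a*D) * sol a zm x"
proof -
  have "sol a zj x \<le> 2 powr a * exp (-a*\<bar>x-zj\<bar>)" by (rule sol_le[OF assms(1)])
  also have "\<dots> \<le> 2 powr a * (exp (-a*D) * exp (-a*\<bar>x-zm\<bar>))"
  proof -
    have "a * (D + \<bar>x - zm\<bar>) \<le> a * \<bar>x - zj\<bar>" using assms by (intro mult_left_mono) auto
    thus ?thesis by (intro mult_left_mono) (auto simp flip: exp_add simp: algebra_simps)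
  qed
  also have "\<dots> \<le> 2 powr a * (exp (-a*D) * sol a zm x)"
    by (intro mult_left_mono sol_ge assms) auto
  finally show ?thesis by (simp add: mult.assoc)
qed

lemma sol_ratio_ge:
  assumes "a \<ge> 0" "\<bar>x - zj\<bar> \<le> \<bar>x - zm\<bar> + D"
  shows "exp (-a*D) / 2 powr a * sol a zm x \<le> sol a zj x"
proof -
  have "exp (-a*D) / 2 powr a * sol a zm x \<le> exp (-a*D) / 2 powr a * (2 powr a * exp (-a*\<bar>x-zm\<bar>))"
    by (intro mult_left_mono sol_le assms) auto
  also have "\<dots> = exp (-a*(\<bar>x-zm\<bar> + D))" by (simp add: algebra_simps flip: exp_add)
  also have "\<dots> \<le> exp (-a*\<bar>x-zj\<bar>)" using assms by (auto intro!: mult_left_mono)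
  also have "\<dots> \<le> sol a zj x" by (rule sol_ge[OF assms(1)])
  finally show ?thesis .
qed

lemma sol_deriv: "(sol a z has_real_derivative (- a * tanh (x - z) * sol a z x)) (at x)"
proof -
  have e: "sol a z = (\<lambda>x. exp (-a * ln (cosh (x - z))))"
    by (auto simp: sol_def powr_def fun_eq_iff)
  show ?thesis unfolding e
    by (auto intro!: derivative_eq_intros simp: tanh_def field_simps)
qed

definition gaps :: "(nat \<Rightarrow> real) \<Rightarrow> nat \<Rightarrow> real \<Rightarrow> bool" where
  "gaps Z k E \<longleftrightarrow> (\<forall>l j. 1 \<le> l \<longrightarrow> l < j \<longrightarrow> j \<le> k \<longrightarrow> Z j - Z l \<ge> E)"

lemma gaps_intro:
  assumes A: "\<forall>j\<in>{1..<k}. Z j < Z (Suc j) \<and> Z (Suc j) - Z j \<ge> E" and E: "E \<ge> 0"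
  shows "gaps Z k E"
proof -
  have "1 \<le> l \<longrightarrow> l < j \<longrightarrow> j \<le> k \<longrightarrow> Z j - Z l \<ge> E" for l j
  proof (induction j)
    case 0 then show ?case by simp
  next
    case (Suc j)
    show ?case
    proof (intro impI)
      assume h: "1 \<le> l" "l < Suc j" "Suc j \<le> k"
      have sj: "Z (Suc j) - Z j \<ge> E" using A h by auto
      show "Z (Suc j) - Z l \<ge> E"
      proof (cases "l = j")
        case True thus ?thesis using sj by simp
      next
        case False
        hence "Z j - Z l \<ge> E" using Suc h by auto
        thus ?thesis using sj E by linarith
      qed
    qed
  qed
  thus ?thesis unfolding gaps_def by blast
qed

lemma gaps_mono: assumes "gaps Z k E" "E \<ge> 0" "1 \<le> l" "l \<le> j" "j \<le> k" shows "Z l \<le> Z j"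
proof (cases "l = j")
  case False
  hence "l < j" using assms by simp
  hence "Z j - Z l \<ge> E" using assms unfolding gaps_def by blast
  thus ?thesis using assms by linarith
qed simp

lemma nearest_dom:
  assumes g: "gaps Z k E" and far: "\<And>m. 1 \<le> m \<Longrightarrow> m < k \<Longrightarrow> \<bar>x - (Z m + Z (Suc m))/2\<bar> \<ge> L"
    and LE: "2*L \<le> E" "L > 0" and k: "k \<ge> 1"
  shows "\<exists>m\<in>{1..k}. \<forall>j\<in>{1..k}. j \<noteq> m \<longrightarrow> \<bar>x - Z j\<bar> \<ge> \<bar>x - Z m\<bar> + 2*L"
proof -
  let ?f = "\<lambda>j. \<bar>x - Z j\<bar>"
  have fin: "finite (?f ` {1..k})" "?f ` {1..k} \<noteq> {}" using k by auto
  obtain m where m: "m \<in> {1..k}" "?f m = Min (?f ` {1..k})" using Min_in[OF fin] by auto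
  have mn: "?f m \<le> ?f j" if "j \<in> {1..k}" for j using m that fin by auto
  have E0: "E \<ge> 0" using LE by linarith
  have "\<bar>x - Z j\<bar> \<ge> \<bar>x - Z m\<bar> + 2*L" if j: "j \<in> {1..k}" "j \<noteq> m" for j
  proof (cases "j > m")
    case True
    have f1: "Z (Suc m) - Z m \<ge> E" using g True j m unfolding gaps_def by auto
    have f2: "Z (Suc m) \<le> Z j" using gaps_mono[OF g E0, of "Suc m" j] True j by auto
    have f3: "\<bar>x - Z m\<bar> \<le> \<bar>x - Z (Suc m)\<bar>" using mn[of "Suc m"] True j by auto
    have f4: "\<bar>x - (Z m + Z (Suc m))/2\<bar> \<ge> L" using far[of m] True j m by auto
    show ?thesis using f1 f2 f3 f4 LE by (smt (z3) field_sum_of_halves)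
  next
    case False
    hence jm: "j < m" using j by auto
    then obtain m' where m': "m = Suc m'" by (cases m) auto
    have f1: "Z m - Z m' \<ge> E" using g jm j m m' unfolding gaps_def by auto
    have f2: "Z j \<le> Z m'" using gaps_mono[OF g E0, of j m'] jm j m m' by auto
    have f3: "\<bar>x - Z m\<bar> \<le> \<bar>x - Z m'\<bar>" using mn[of m'] jm j m m' by auto
    have f4: "\<bar>x - (Z m' + Z m)/2\<bar> \<ge> L" using far[of m'] jm j m m' by auto
    show ?thesis using f1 f2 f3 f4 LE by (smt (z3) field_sum_of_halves)
  qed
  thus ?thesis using m by blast
qed

lemma strip_geom:
  assumes g: "gaps Z k E" and m: "1 \<le> m" "m < k" and x: "\<bar>x - (Z m + Z (Suc m))/2\<bar> \<le> L"
    and LE: "2*L + 2 \<le> E" "L > 0"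
  shows "x - Z m \<ge> 1" "Z (Suc m) - x \<ge> 1"
    "\<And>j. j \<in> {1..k} \<Longrightarrow> \<bar>x - Z m\<bar> \<le> \<bar>x - Z j\<bar> + 2*L"
    "\<bar>x - Z (Suc m)\<bar> \<le> \<bar>x - Z m\<bar> + 2*L"
    "\<And>j. j \<in> {1..k} \<Longrightarrow> j \<noteq> m \<Longrightarrow> j \<noteq> Suc m \<Longrightarrow> \<bar>x - Z j\<bar> \<ge> \<bar>x - Z m\<bar> + (E - 2*L)"
proof -
  have E0: "E \<ge> 0" using LE by linarith
  have f1: "Z (Suc m) - Z m \<ge> E" using g m unfolding gaps_def by auto
  show a1: "x - Z m \<ge> 1" using f1 x LE by (smt (z3) field_sum_of_halves)
  show a2: "Z (Suc m) - x \<ge> 1" using f1 x LE by (smt (z3) field_sum_of_halves)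
  note a = a1 a2
  show "\<bar>x - Z (Suc m)\<bar> \<le> \<bar>x - Z m\<bar> + 2*L" using a x by (smt (z3) field_sum_of_halves)
  show "\<bar>x - Z m\<bar> \<le> \<bar>x - Z j\<bar> + 2*L" if j: "j \<in> {1..k}" for j
  proof (cases "j > m")
    case True
    have "Z (Suc m) \<le> Z j" using gaps_mono[OF g E0, of "Suc m" j] True j by auto
    thus ?thesis using a x by (smt (z3) field_sum_of_halves)
  next
    case False
    have "Z j \<le> Z m" using gaps_mono[OF g E0, of j m] False j m by auto
    thus ?thesis using a x by (smt (z3) field_sum_of_halves)
  qed
  show "\<bar>x - Z j\<bar> \<ge> \<bar>x - Z m\<bar> + (E - 2*L)" if j: "j \<in> {1..k}" "j \<noteq> m" "j \<noteq> Suc m" for j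
  proof (cases "j > m")
    case True
    hence "Z j - Z (Suc m) \<ge> E" using g j unfolding gaps_def by auto
    thus ?thesis using a x by (smt (z3) field_sum_of_halves)
  next
    case False
    hence "Z m - Z j \<ge> E" using g j m unfolding gaps_def by auto
    thus ?thesis using a x LE by (smt (z3) field_sum_of_halves)
  qed
qed

lemma deriv_lin:
  assumes d: "\<And>x. lo \<le> x \<Longrightarrow> x \<le> hi \<Longrightarrow> (g has_real_derivative g' x) (at x)"
    and b: "\<And>x. lo \<le> x \<Longrightarrow> x \<le> hi \<Longrightarrow> g' x \<ge> \<delta>"
    and xy: "lo \<le> x" "x \<le> y" "y \<le> hi"
  shows "g y - g x \<ge> \<delta> * (y - x)"
proof -
  have "(\<lambda>t. g t - \<delta> * t) x \<le> (\<lambda>t. g t - \<delta> * t) y"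
  proof (rule deriv_nonneg_imp_mono[of x y "\<lambda>t. g t - \<delta> * t" "\<lambda>t. g' t - \<delta>"])
    fix t assume t: "t \<in> {x..y}"
    show "((\<lambda>t. g t - \<delta> * t) has_real_derivative g' t - \<delta>) (at t)"
      using d[of t] t xy by (auto intro!: derivative_eq_intros)
    show "g' t - \<delta> \<ge> 0" using b[of t] t xy by auto
  qed (use xy in auto)
  thus ?thesis by (simp add: algebra_simps)
qed

lemma lin_lower:
  fixes g :: "real \<Rightarrow> real" and lo hi \<delta> :: real
  assumes lh: "lo \<le> hi" and c: "continuous_on {lo..hi} g"
    and inc: "\<And>x y. lo \<le> x \<Longrightarrow> x \<le> y \<Longrightarrow> y \<le> hi \<Longrightarrow> g y - g x \<ge> \<delta> * (y - x)"
    and d: "\<delta> \<ge> 0"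
  shows "\<exists>x0\<in>{lo..hi}. \<forall>x\<in>{lo..hi}. \<bar>g x\<bar> \<ge> \<delta> * \<bar>x - x0\<bar>"
proof (cases "g lo \<ge> 0")
  case True
  have "\<bar>g x\<bar> \<ge> \<delta> * \<bar>x - lo\<bar>" if "x \<in> {lo..hi}" for x
  proof -
    have "g x - g lo \<ge> \<delta> * (x - lo)" by (rule inc) (use that in auto)
    moreover have "\<bar>x - lo\<bar> = x - lo" using that by auto
    ultimately show ?thesis using True by (smt (verit) abs_ge_self)
  qed
  thus ?thesis using lh by (intro bexI[of _ lo]) auto
next
  case F1: False
  show ?thesis
  proof (cases "g hi \<le> 0")
    case True
    have "\<bar>g x\<bar> \<ge> \<delta> * \<bar>x - hi\<bar>" if "x \<in> {lo..hi}" for x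
    proof -
      have "g hi - g x \<ge> \<delta> * (hi - x)" using inc[of x hi] that by auto
      moreover have "\<delta> * (hi - x) \<ge> 0" using that d by auto
      ultimately show ?thesis using True that by (auto simp: abs_if)
    qed
    thus ?thesis using lh by (intro bexI[of _ hi]) auto
  next
    case False
    obtain x0 where x0: "lo \<le> x0" "x0 \<le> hi" "g x0 = 0" using IVT'[of g lo 0 hi] F1 False lh c by auto
    have "\<bar>g x\<bar> \<ge> \<delta> * \<bar>x - x0\<bar>" if x: "x \<in> {lo..hi}" for x
    proof (cases "x \<ge> x0")
      case True
      thus ?thesis using inc[of x0 x] x x0 d by (auto simp: abs_if)
    next
      case False
      have "g x0 - g x \<ge> \<delta> * (x0 - x)" using inc[of x x0] x x0 False by auto
      moreover have "\<delta> * (x0 - x) \<ge> 0" using False d by auto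
      ultimately show ?thesis using x0 False by (auto simp: abs_if)
    qed
    thus ?thesis using x0 by (intro bexI[of _ x0]) auto
  qed
qed

lemma dom_bound:
  fixes s th :: "nat \<Rightarrow> real"
  assumes fin: "finite J" and mJ: "m \<in> J" and iJ: "i \<in> J" and nn: "\<forall>j\<in>J. s j \<ge> 0"
    and pos: "s m > 0" and dom: "2 * (\<Sum>j\<in>J-{m}. s j) \<le> s m" and q: "0 < q" "q < 1"
  shows "ennreal (s i) * epow (cmod (\<Sum>j\<in>J. cis (th j) * complex_of_real (s j))) (-q)
         \<le> ennreal (2 * s i powr (1-q))"
proof -
  let ?S = "\<Sum>j\<in>J. cis (th j) * complex_of_real (s j)"
  let ?R = "\<Sum>j\<in>J-{m}. cis (th j) * complex_of_real (s j)"
  have sp: "?S = cis (th m) * complex_of_real (s m) + ?R" using fin mJ by (simp add: sum.remove)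
  have "cmod ?R \<le> (\<Sum>j\<in>J-{m}. cmod (cis (th j) * complex_of_real (s j)))" by (rule norm_sum)
  also have "\<dots> = (\<Sum>j\<in>J-{m}. s j)" using nn by (intro sum.cong) (auto simp: norm_mult)
  finally have R: "cmod ?R \<le> (\<Sum>j\<in>J-{m}. s j)" .
  have "cmod (cis (th m) * complex_of_real (s m)) - cmod (- ?R) \<le> cmod ?S"
    using norm_diff_ineq[of "cis (th m) * complex_of_real (s m)" "?R"] sp by simp
  hence lb: "cmod ?S \<ge> s m / 2" using R dom pos by (simp add: norm_mult)
  have sim: "s i \<le> s m"
  proof (cases "i = m")
    case False
    hence "s i \<le> (\<Sum>j\<in>J-{m}. s j)" using fin iJ nn by (intro member_le_sum) auto
    thus ?thesis using dom pos by linarith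
  qed simp
  have si0: "s i \<ge> 0" using nn iJ by auto
  have Spos: "cmod ?S > 0" using lb pos by linarith
  hence "epow (cmod ?S) (-q) = ennreal (cmod ?S powr (-q))" unfolding epow_def by simp
  also have "\<dots> \<le> ennreal ((s m / 2) powr (-q))"
    using lb pos q by (intro ennreal_leI powr_mono2') auto
  finally have e: "epow (cmod ?S) (-q) \<le> ennreal ((s m / 2) powr (-q))" .
  have key: "s i * (s m / 2) powr (-q) \<le> 2 * s i powr (1-q)"
  proof (cases "s i = 0")
    case False
    hence sip: "s i > 0" using si0 by simp
    have "(s m / 2) powr (-q) \<le> (s i / 2) powr (-q)" using sim sip q by (intro powr_mono2') auto
    also have "\<dots> = 2 powr q * s i powr (-q)" by (simp add: powr_divide powr_minus field_simps)
    finally have "s i * (s m / 2) powr (-q) \<le> s i * (2 powr q * s i powr (-q))"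
      using si0 by (intro mult_left_mono) auto
    also have "\<dots> = 2 powr q * s i powr (1-q)"
      using sip by (simp add: powr_diff powr_minus field_simps)
    also have "\<dots> \<le> 2 * s i powr (1-q)"
    proof -
      have "2 powr q \<le> 2 powr (1::real)" using q by (intro powr_mono) auto
      thus ?thesis by (intro mult_right_mono) auto
    qed
    finally show ?thesis .
  qed simp
  have "ennreal (s i) * epow (cmod ?S) (-q) \<le> ennreal (s i) * ennreal ((s m / 2) powr (-q))"
    by (intro mult_left_mono e) auto
  also have "\<dots> = ennreal (s i * (s m / 2) powr (-q))" using si0 by (simp add: ennreal_mult)
  also have "\<dots> \<le> ennreal (2 * s i powr (1-q))" using key by (intro ennreal_leI)
  finally show ?thesis .
qed

lemma strip_bound:
  assumes q: "0 < q" "q < 1" and si: "0 \<le> si" "si \<le> 1" "si \<le> C1 * sm" and sm: "sm > 0"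
    and S: "Sn \<ge> sm * \<bar>gx\<bar>" and g: "\<bar>gx\<bar> \<ge> \<delta> * \<bar>x - x0\<bar>" and d: "\<delta> > 0" and C1: "C1 > 0"
  shows "ennreal si * epow Sn (-q) \<le> ennreal (C1 powr q * \<delta> powr (-q)) * epow \<bar>x - x0\<bar> (-q)"
proof (cases "x = x0")
  case True
  have "C1 powr q * \<delta> powr (-q) > 0" using C1 d by simp
  hence "ennreal (C1 powr q * \<delta> powr (-q)) * epow \<bar>x - x0\<bar> (-q) = top"
    using True q C1 d by (simp add: epow_def ennreal_mult_top)
  thus ?thesis by simp
next
  case False
  let ?d = "\<bar>x - x0\<bar>"
  have dp: "?d > 0" using False by simp
  have lb: "Sn \<ge> sm * (\<delta> * ?d)" using S g sm by (meson mult_left_mono order_trans less_imp_le)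
  have lbp: "sm * (\<delta> * ?d) > 0" using sm d dp by simp
  have "epow Sn (-q) = ennreal (Sn powr (-q))" using lb lbp q unfolding epow_def by auto
  also have "\<dots> \<le> ennreal ((sm * (\<delta> * ?d)) powr (-q))"
    using lb lbp q by (intro ennreal_leI powr_mono2') auto
  finally have e: "epow Sn (-q) \<le> ennreal ((sm * (\<delta> * ?d)) powr (-q))" .
  have key: "si * sm powr (-q) \<le> C1 powr q"
  proof (cases "si = 0")
    case False
    hence sip: "si > 0" using si by simp
    have a: "si powr (1-q) \<le> 1" using powr_mono2[of "1-q" si 1] si q by simp
    have b: "si powr q \<le> (C1 * sm) powr q" using si sip q by (intro powr_mono2) auto
    have "si * sm powr (-q) = si powr (1-q) * (si powr q * sm powr (-q))"
      using sip by (simp add: powr_diff powr_minus field_simps)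
    also have "\<dots> \<le> 1 * ((C1 * sm) powr q * sm powr (-q))"
      using a b by (intro mult_mono) auto
    also have "\<dots> = C1 powr q" using sm C1 by (simp add: powr_mult powr_minus field_simps)
    finally show ?thesis .
  qed (use C1 in simp)
  have "ennreal si * epow Sn (-q) \<le> ennreal si * ennreal ((sm * (\<delta> * ?d)) powr (-q))"
    by (intro mult_left_mono e) auto
  also have "\<dots> = ennreal ((si * sm powr (-q)) * \<delta> powr (-q) * ?d powr (-q))"
    using si sm d dp by (simp add: ennreal_mult powr_mult mult.assoc)
  also have "\<dots> \<le> ennreal (C1 powr q * \<delta> powr (-q) * ?d powr (-q))"
    using key by (intro ennreal_leI mult_right_mono) auto
  also have "\<dots> = ennreal (C1 powr q * \<delta> powr (-q)) * epow ?d (-q)"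
    using dp C1 d by (simp add: epow_def ennreal_mult)
  finally show ?thesis .
qed




lemma cosh_meas0: "(cosh :: real \<Rightarrow> real) \<in> borel_measurable borel"
  by (intro borel_measurable_continuous_onI continuous_intros)
lemma tanh_meas0: "(tanh :: real \<Rightarrow> real) \<in> borel_measurable borel"
  by (intro borel_measurable_continuous_onI continuous_intros) auto
lemma cosh_meas[measurable]: "f \<in> borel_measurable M \<Longrightarrow> (\<lambda>x. cosh (f x :: real)) \<in> borel_measurable M"
  using measurable_compose[OF _ cosh_meas0] by blast
lemma tanh_meas[measurable]: "f \<in> borel_measurable M \<Longrightarrow> (\<lambda>x. tanh (f x :: real)) \<in> borel_measurable M"
  using measurable_compose[OF _ tanh_meas0] by blast

lemma SUP_ind:
  fixes F :: "real \<Rightarrow> ennreal"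
  assumes mono: "\<And>n. A n \<subseteq> A (Suc n)"
  shows "(SUP n. F x * indicator (A n) x) = F x * indicator (\<Union>n. A n) x"
proof (cases "x \<in> (\<Union>n. A n)")
  case True
  then obtain n0 where n0: "x \<in> A n0" by auto
  have "(SUP n. F x * indicator (A n) x) \<le> F x"
    by (intro SUP_least) (auto simp: indicator_def)
  moreover have "F x \<le> (SUP n. F x * indicator (A n) x)"
    using n0 by (intro SUP_upper2[of n0]) auto
  ultimately show ?thesis using True by (auto intro: antisym)
next
  case False
  thus ?thesis by (auto simp: indicator_def)
qed

lemma nn_int_SUP_ind:
  fixes F :: "real \<Rightarrow> ennreal"
  assumes mono: "\<And>n. A n \<subseteq> A (Suc n)" and [measurable]: "F \<in> borel_measurable borel"
    and [measurable]: "\<And>n. A n \<in> sets borel"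
  shows "(\<integral>\<^sup>+x. F x * indicator (\<Union>n. A n) x \<partial>lborel) = (SUP n. \<integral>\<^sup>+x. F x * indicator (A n) x \<partial>lborel)"
proof -
  have "(\<integral>\<^sup>+x. F x * indicator (\<Union>n. A n) x \<partial>lborel) = (\<integral>\<^sup>+x. (SUP n. F x * indicator (A n) x) \<partial>lborel)"
    using SUP_ind[where A=A and F=F, OF mono] by simp
  also have "\<dots> = (SUP n. \<integral>\<^sup>+x. F x * indicator (A n) x \<partial>lborel)"
  proof (rule nn_integral_monotone_convergence_SUP)
    show "incseq (\<lambda>n x. F x * indicator (A n) x)"
    proof (intro incseq_SucI le_funI)
      fix n x
      show "F x * indicator (A n) x \<le> F x * indicator (A (Suc n)) x"
        using mono[of n] by (intro mult_left_mono) (auto simp: indicator_def)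
    qed
  qed measurable
  finally show ?thesis .
qed

lemma subst_tanh:
  fixes f :: "real \<Rightarrow> ennreal"
  assumes [measurable]: "f \<in> borel_measurable borel"
  shows "(\<integral>\<^sup>+y. indicator {-1<..<1} y * f y \<partial>lborel) = (\<integral>\<^sup>+x. f (tanh x) * ennreal (1 - tanh x ^ 2) \<partial>lborel)"
proof -
  define A where "A n = {tanh (-real (Suc n))..tanh (real (Suc n))}" for n
  define B where "B n = {-real (Suc n)..real (Suc n)}" for n
  have UA: "(\<Union>n. A n) = {-1<..<1}"
  proof
    show "(\<Union>n. A n) \<subseteq> {-1<..<1}"
    proof
      fix y assume "y \<in> (\<Union>n. A n)"
      then obtain n where "y \<in> A n" by auto
      moreover have "-1 < tanh (-real (Suc n))" "tanh (real (Suc n)) < 1"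
        by (rule tanh_real_gt_neg1, rule tanh_real_lt_1)
      ultimately show "y \<in> {-1<..<1}" unfolding A_def by auto
    qed
    show "{-1<..<1} \<subseteq> (\<Union>n. A n)"
    proof
      fix y :: real assume y: "y \<in> {-1<..<1}"
      obtain n where n: "\<bar>artanh y\<bar> \<le> real n" using real_arch_simple by blast
      have r: "(1+y)/(1-y) > 0" using y by auto
      have "exp (-2 * artanh y) = inverse ((1+y)/(1-y))"
        unfolding artanh_def using r by (simp add: exp_minus)
      hence e: "exp (-2 * artanh y) = (1-y)/(1+y)" by simp
      have "tanh (artanh y) = (1 - (1-y)/(1+y)) / (1 + (1-y)/(1+y))"
        by (simp only: tanh_real_altdef e)
      also have "\<dots> = y" using y by (simp add: field_simps)
      finally have "tanh (artanh y) = y" .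
      moreover have "tanh (-real (Suc n)) \<le> tanh (artanh y)" "tanh (artanh y) \<le> tanh (real (Suc n))"
        using n by (auto simp del: tanh_minus)
      ultimately show "y \<in> (\<Union>n. A n)" unfolding A_def by auto
    qed
  qed
  have UB: "(\<Union>n. B n) = UNIV"
  proof -
    have "x \<in> (\<Union>n. B n)" for x
    proof -
      obtain n where "\<bar>x\<bar> \<le> real n" using real_arch_simple by blast
      thus ?thesis unfolding B_def by (auto intro!: exI[of _ n])
    qed
    thus ?thesis by auto
  qed
  have monoA: "A n \<subseteq> A (Suc n)" for n unfolding A_def by (auto simp del: tanh_minus)
  have monoB: "B n \<subseteq> B (Suc n)" for n unfolding B_def by auto
  have eq: "(\<integral>\<^sup>+y. f y * indicator (A n) y \<partial>lborel) =
            (\<integral>\<^sup>+x. f (tanh x) * ennreal (1 - tanh x ^ 2) * indicator (B n) x \<partial>lborel)" for n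
    unfolding A_def B_def
  proof (rule nn_integral_substitution_aux)
    show "continuous_on {- real (Suc n)..real (Suc n)} (\<lambda>x. 1 - tanh x ^ 2)"
      by (intro continuous_intros) auto
    show "(tanh has_real_derivative 1 - tanh x ^ 2) (at x)" for x
      by (auto intro!: derivative_eq_intros)
    show "0 \<le> 1 - tanh x ^ 2" for x :: real
    proof -
      have "\<bar>tanh x\<bar> \<le> 1" using tanh_real_bounds[of x] by auto
      hence "tanh x ^ 2 \<le> 1" by (simp add: abs_square_le_1)
      thus ?thesis by simp
    qed
  qed auto
  have "(\<integral>\<^sup>+y. indicator {-1<..<1} y * f y \<partial>lborel) = (\<integral>\<^sup>+y. f y * indicator (\<Union>n. A n) y \<partial>lborel)"
    by (simp add: UA mult.commute)
  also have "\<dots> = (SUP n. \<integral>\<^sup>+y. f y * indicator (A n) y \<partial>lborel)"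
    by (rule nn_int_SUP_ind[where A=A, OF monoA]) (auto simp: A_def)
  also have "\<dots> = (SUP n. \<integral>\<^sup>+x. f (tanh x) * ennreal (1 - tanh x ^ 2) * indicator (B n) x \<partial>lborel)"
    by (simp add: eq)
  also have "\<dots> = (\<integral>\<^sup>+x. f (tanh x) * ennreal (1 - tanh x ^ 2) * indicator (\<Union>n. B n) x \<partial>lborel)"
    by (rule nn_int_SUP_ind[where A=B, OF monoB, symmetric]) (auto simp: B_def)
  also have "\<dots> = (\<integral>\<^sup>+x. f (tanh x) * ennreal (1 - tanh x ^ 2) \<partial>lborel)" by (simp add: UB)
  finally show ?thesis .
qed

lemma one_minus_tanh_sq: "1 - tanh (x::real) ^ 2 = 1 / cosh x ^ 2"
proof -
  have "sinh x ^ 2 = cosh x ^ 2 - 1" using cosh_square_eq[of x] by simp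
  thus ?thesis unfolding tanh_def by (simp add: power_divide field_simps)
qed

lemma sech_int0: "(\<integral>\<^sup>+x. ennreal (1 / cosh x ^ 2) \<partial>lborel) = 2"
proof -
  have m: "(\<lambda>_::real. 1::ennreal) \<in> borel_measurable borel" by simp
  have "(\<integral>\<^sup>+x. ennreal (1 / cosh x ^ 2) \<partial>lborel) = (\<integral>\<^sup>+x. (\<lambda>_::real. 1::ennreal) (tanh x) * ennreal (1 - tanh x ^ 2) \<partial>lborel)"
    by (simp add: one_minus_tanh_sq)
  also have "\<dots> = (\<integral>\<^sup>+y. indicator {-1<..<(1::real)} y * (\<lambda>_::real. 1::ennreal) y \<partial>lborel)"
    by (rule subst_tanh[OF m, symmetric])
  also have "\<dots> = (\<integral>\<^sup>+y. indicator {-1<..<(1::real)} y \<partial>lborel)" by simp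
  also have "\<dots> = emeasure lborel {-1<..<(1::real)}"
    by (rule nn_integral_indicator) simp
  also have "\<dots> = ennreal (1 - (-1))" by (rule emeasure_lborel_Ioo) simp
  finally show ?thesis by simp
qed

lemma sech_int:
  assumes c: "c > 0"
  shows "(\<integral>\<^sup>+x. ennreal (1 / cosh (t + c * x) ^ 2) \<partial>lborel) = ennreal (2 / c)"
proof -
  let ?X = "\<integral>\<^sup>+x. ennreal (1 / cosh (t + c * x) ^ 2) \<partial>lborel"
  have "(\<integral>\<^sup>+x. ennreal (1 / cosh x ^ 2) \<partial>lborel) = \<bar>c\<bar> * ?X"
    by (rule nn_integral_real_affine[where f = "\<lambda>x. ennreal (1 / cosh x ^ 2)"]) (use c in auto)
  hence h: "ennreal 2 = ennreal c * ?X" using c by (simp add: sech_int0)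
  have "ennreal (1/c * 2) = ennreal (1/c) * ennreal 2" using c by (intro ennreal_mult) auto
  hence "ennreal (2 / c) = ennreal (1/c) * ennreal 2" by simp
  also have "\<dots> = (ennreal (1/c) * ennreal c) * ?X" by (subst h) (simp add: mult.assoc)
  also have "ennreal (1/c) * ennreal c = 1" using c by (simp add: ennreal_mult[symmetric])
  finally show ?thesis by simp
qed

lemma pow_int0:
  assumes q: "0 < q" "q < 1" and R: "R \<ge> 0"
  shows "(\<integral>\<^sup>+t. ennreal (t powr (-q)) * indicator {0..R} t \<partial>lborel) = ennreal (R powr (1-q) / (1-q))"
proof -
  have "((\<lambda>x. x powr (-q)) has_integral (R powr (-q+1) / (-q+1))) {0..R}"
    using q R by (intro has_integral_powr_from_0) auto
  hence "(\<integral>\<^sup>+t. ennreal (t powr (-q)) * indicator {0..R} t \<partial>lborel) = ennreal (R powr (-q+1) / (-q+1))"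
    by (intro nn_integral_has_integral_lebesgue') auto
  thus ?thesis by (simp add: add.commute)
qed

lemma sing_int:
  assumes q: "0 < q" "q < 1" and R: "R \<ge> 0"
  shows "(\<integral>\<^sup>+x. indicator {c-R..c+R} x * epow \<bar>x-c\<bar> (-q) \<partial>lborel) \<le> ennreal (2 * (R powr (1-q) / (1-q)))"
proof -
  define f where "f t = ennreal (t powr (-q)) * indicator {0..R} t" for t :: real
  have fm[measurable]: "f \<in> borel_measurable borel" unfolding f_def by measurable
  have I: "(\<integral>\<^sup>+t. f t \<partial>lborel) = ennreal (R powr (1-q) / (1-q))"
    unfolding f_def by (rule pow_int0[OF q R])
  have A1: "(\<integral>\<^sup>+t. f t \<partial>lborel) = (\<integral>\<^sup>+x. f (-c + 1 * x) \<partial>lborel)"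
    using nn_integral_real_affine[OF fm, of 1 "-c"] by simp
  have A2: "(\<integral>\<^sup>+t. f t \<partial>lborel) = (\<integral>\<^sup>+x. f (c + (-1) * x) \<partial>lborel)"
    using nn_integral_real_affine[OF fm, of "-1" c] by simp
  have pw: "AE x in lborel. indicator {c-R..c+R} x * epow \<bar>x-c\<bar> (-q) \<le> f (-c + 1 * x) + f (c + (-1) * x)"
    using AE_lborel_singleton[of c]
  proof (eventually_elim)
    case (elim x)
    hence e: "epow \<bar>x-c\<bar> (-q) = ennreal (\<bar>x-c\<bar> powr (-q))" by (simp add: epow_def)
    show ?case
    proof (cases "x > c")
      case True
      have "indicator {c-R..c+R} x * epow \<bar>x-c\<bar> (-q) = f (-c + 1 * x)"
        using True R unfolding e f_def by (auto simp: indicator_def mult.commute)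
      thus ?thesis by (simp add: add_increasing2)
    next
      case False
      hence F: "x < c" using elim by auto
      have "indicator {c-R..c+R} x * epow \<bar>x-c\<bar> (-q) = f (c + (-1) * x)"
        using F R unfolding e f_def by (auto simp: indicator_def mult.commute)
      thus ?thesis by (simp add: add_increasing)
    qed
  qed
  have "(\<integral>\<^sup>+x. indicator {c-R..c+R} x * epow \<bar>x-c\<bar> (-q) \<partial>lborel)
        \<le> (\<integral>\<^sup>+x. f (-c + 1 * x) + f (c + (-1) * x) \<partial>lborel)"
    by (rule nn_integral_mono_AE[OF pw])
  also have "\<dots> = (\<integral>\<^sup>+x. f (-c + 1 * x) \<partial>lborel) + (\<integral>\<^sup>+x. f (c + (-1) * x) \<partial>lborel)"
    by (rule nn_integral_add) auto
  also have "\<dots> = ennreal (R powr (1-q) / (1-q)) + ennreal (R powr (1-q) / (1-q))"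
    using A1 A2 I by simp
  also have "\<dots> = ennreal (2 * (R powr (1-q) / (1-q)))"
    using q R by (simp add: ennreal_plus[symmetric] del: ennreal_plus)
  finally show ?thesis .
qed




definition rho :: "real \<Rightarrow> real \<Rightarrow> real \<Rightarrow> real \<Rightarrow> real" where
  "rho a zm zj x = sol a zj x / sol a zm x"

lemma rho_deriv:
  "(rho a zm zj has_real_derivative a * (tanh (x - zm) - tanh (x - zj)) * rho a zm zj x) (at x)"
proof -
  have "((\<lambda>x. sol a zj x / sol a zm x) has_real_derivative
      ((- a * tanh (x - zj) * sol a zj x) * sol a zm x - sol a zj x * (- a * tanh (x - zm) * sol a zm x))
        / (sol a zm x * sol a zm x)) (at x)"
    by (rule DERIV_divide[OF sol_deriv sol_deriv]) (simp add: sol_pos[THEN less_imp_neq, symmetric])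
  moreover have "((- a * tanh (x - zj) * sol a zj x) * sol a zm x - sol a zj x * (- a * tanh (x - zm) * sol a zm x))
        / (sol a zm x * sol a zm x) = a * (tanh (x - zm) - tanh (x - zj)) * rho a zm zj x"
    using sol_pos[of a zm x] unfolding rho_def by (simp add: field_simps)
  ultimately show ?thesis unfolding rho_def[abs_def] by simp
qed

definition gfun :: "real \<Rightarrow> (nat \<Rightarrow> real) \<Rightarrow> (nat \<Rightarrow> real) \<Rightarrow> nat \<Rightarrow> nat \<Rightarrow> real \<Rightarrow> real" where
  "gfun a Z th k m x = (\<Sum>j=1..k. cos (th j - th (Suc m)) * rho a (Z m) (Z j) x)"

definition gder :: "real \<Rightarrow> (nat \<Rightarrow> real) \<Rightarrow> (nat \<Rightarrow> real) \<Rightarrow> nat \<Rightarrow> nat \<Rightarrow> real \<Rightarrow> real" where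
  "gder a Z th k m x = (\<Sum>j=1..k. cos (th j - th (Suc m)) * (a * (tanh (x - Z m) - tanh (x - Z j)) * rho a (Z m) (Z j) x))"

lemma gfun_deriv: "(gfun a Z th k m has_real_derivative gder a Z th k m x) (at x)"
  unfolding gfun_def[abs_def] gder_def
  by (intro DERIV_sum DERIV_cmult rho_deriv)

lemma tanh_ge_half: "x \<ge> 1 \<Longrightarrow> tanh (x::real) \<ge> 1/2"
proof -
  assume x: "x \<ge> 1"
  have "exp (2::real) \<ge> 3" using exp_ge_add_one_self[of 2] by simp
  hence "exp (-2::real) \<le> 1/3" by (simp add: exp_minus field_simps)
  moreover have d: "1 + exp (-2::real) > 0" by (simp add: add_pos_pos)
  ultimately have "1/2 \<le> (1 - exp (-2::real)) / (1 + exp (-2))"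
    by (simp add: le_divide_eq)
  hence "tanh (1::real) \<ge> 1/2" unfolding tanh_real_altdef by simp
  moreover have "tanh 1 \<le> tanh x" using x by simp
  ultimately show ?thesis by linarith
qed

lemma abs_tanh_diff: "\<bar>tanh (u::real) - tanh v\<bar> \<le> 2"
  using tanh_real_bounds[of u] tanh_real_bounds[of v] by auto

lemma gder_lower:
  assumes a: "a \<ge> 1" and g: "gaps Z k E" and m: "1 \<le> m" "m < k"
    and x: "\<bar>x - (Z m + Z (Suc m))/2\<bar> \<le> L"
    and LE: "2*L + 2 \<le> E" "L > 0"
    and cond: "2 powr a * exp (-a*(E-2*L)) * (4 * real k) \<le> exp (-a*(2*L)) / 2 powr a"
  shows "gder a Z th k m x \<ge> a * (exp (-a*(2*L)) / 2 powr a) / 2"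
proof -
  note G = strip_geom[OF g m x LE]
  define B where "B = 2 powr a * exp (-a*(E-2*L))"
  define rm where "rm = exp (-a*(2*L)) / 2 powr a"
  have a0: "a \<ge> 0" using a by simp
  let ?T = "\<lambda>j. cos (th j - th (Suc m)) * (a * (tanh (x - Z m) - tanh (x - Z j)) * rho a (Z m) (Z j) x)"
  have fin: "finite {1..k}" by simp
  have sm: "Suc m \<in> {1..k}" using m by auto
  have split: "gder a Z th k m x = ?T (Suc m) + (\<Sum>j\<in>{1..k}-{Suc m}. ?T j)"
    unfolding gder_def by (rule sum.remove[OF fin sm])
  have rho_pos: "rho a zm zj x > 0" for zm zj unfolding rho_def by (simp add: sol_pos)
  have r1: "rho a (Z m) (Z (Suc m)) x \<ge> rm"
  proof -
    have "exp (-a*(2*L)) / 2 powr a * sol a (Z m) x \<le> sol a (Z (Suc m)) x"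
      by (rule sol_ratio_ge[OF a0 G(4)])
    thus ?thesis unfolding rho_def rm_def using sol_pos[of a "Z m" x] by (simp add: field_simps)
  qed
  have th1: "tanh (x - Z m) - tanh (x - Z (Suc m)) \<ge> 1"
  proof -
    have "tanh (x - Z m) \<ge> 1/2" using G(1) by (intro tanh_ge_half) auto
    moreover have "tanh (Z (Suc m) - x) \<ge> 1/2" using G(2) by (intro tanh_ge_half) auto
    moreover have "tanh (x - Z (Suc m)) = - tanh (Z (Suc m) - x)"
      by (metis minus_diff_eq tanh_minus)
    ultimately show ?thesis by linarith
  qed
  have T1: "?T (Suc m) \<ge> a * rm"
  proof -
    have "a * rm \<le> a * ((tanh (x - Z m) - tanh (x - Z (Suc m))) * rho a (Z m) (Z (Suc m)) x)"
    proof (intro mult_left_mono)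
      have "rm \<le> 1 * rho a (Z m) (Z (Suc m)) x" using r1 by simp
      also have "\<dots> \<le> (tanh (x - Z m) - tanh (x - Z (Suc m))) * rho a (Z m) (Z (Suc m)) x"
        using th1 rho_pos by (intro mult_right_mono) (auto intro: less_imp_le)
      finally show "rm \<le> (tanh (x - Z m) - tanh (x - Z (Suc m))) * rho a (Z m) (Z (Suc m)) x" .
    qed (use a0 in auto)
    thus ?thesis by (simp add: mult.assoc)
  qed
  have To: "?T j \<ge> - (2 * a * B)" if j: "j \<in> {1..k} - {Suc m}" for j
  proof (cases "j = m")
    case True
    have "B \<ge> 0" unfolding B_def by simp
    thus ?thesis using True a0 by simp
  next
    case False
    have rj: "rho a (Z m) (Z j) x \<le> B"
    proof -
      have "sol a (Z j) x \<le> 2 powr a * exp (-a*(E - 2*L)) * sol a (Z m) x"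
        using j False by (intro sol_ratio_le[OF a0] G(5)) auto
      thus ?thesis unfolding rho_def B_def using sol_pos[of a "Z m" x] by (simp add: field_simps)
    qed
    have "\<bar>?T j\<bar> \<le> 1 * (a * 2 * B)"
    proof -
      have "\<bar>?T j\<bar> = \<bar>cos (th j - th (Suc m))\<bar> * (a * (\<bar>tanh (x - Z m) - tanh (x - Z j)\<bar> * rho a (Z m) (Z j) x))"
        using a0 rho_pos[of "Z m" "Z j"] by (simp add: abs_mult)
      also have "\<dots> \<le> 1 * (a * (2 * B))"
        using a0 rho_pos[of "Z m" "Z j"] rj abs_tanh_diff[of "x - Z m" "x - Z j"]
        by (intro mult_mono mult_left_mono) (auto intro: less_imp_le)
      finally show ?thesis by simp
    qed
    thus ?thesis by linarith
  qed
  have "(\<Sum>j\<in>{1..k}-{Suc m}. ?T j) \<ge> (\<Sum>j\<in>{1..k}-{Suc m}. - (2 * a * B))"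
    by (intro sum_mono To)
  moreover have "(\<Sum>j\<in>{1..k}-{Suc m}. - (2 * a * B)) \<ge> - (2 * a * B * real k)"
  proof -
    have "card ({1..k}-{Suc m}) \<le> k" using card_Diff1_le[of "{1..k}" "Suc m"] by simp
    moreover have "2 * a * B \<ge> 0" unfolding B_def using a0 by simp
    ultimately have "real (card ({1..k}-{Suc m})) * (2 * a * B) \<le> real k * (2 * a * B)"
      by (intro mult_right_mono) auto
    thus ?thesis by (simp add: algebra_simps)
  qed
  moreover have "2 * a * B * real k \<le> a * rm / 2"
  proof -
    have "B * (4 * real k) \<le> rm" using cond unfolding B_def rm_def by simp
    hence "a * (B * (4 * real k)) \<le> a * rm" using a0 by (intro mult_left_mono) auto
    thus ?thesis by (simp add: algebra_simps)
  qed
  ultimately show ?thesis using split T1 unfolding rm_def by linarith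
qed

lemma epow_meas[measurable]:
  assumes f[measurable]: "f \<in> borel_measurable M"
  shows "(\<lambda>x. epow (f x) b) \<in> borel_measurable M"
proof -
  have e: "(\<lambda>x. epow (f x) b) = (\<lambda>x. if f x = 0 then (if b < 0 then \<infinity> else if b = 0 then 1 else 0) else ennreal (f x powr b))"
    by (simp add: epow_def fun_eq_iff)
  have s: "{x \<in> space M. f x = 0} \<in> sets M" by measurable
  have g: "(\<lambda>x. ennreal (f x powr b)) \<in> borel_measurable M" by measurable
  show ?thesis unfolding e by (rule measurable_If[OF _ g s]) simp
qed

lemma sol_meas0: "(\<lambda>x. sol a z x) \<in> borel_measurable borel"
  unfolding sol_def by (intro borel_measurable_continuous_onI continuous_intros) auto
lemma sol_meas[measurable]: "f \<in> borel_measurable M \<Longrightarrow> (\<lambda>x. sol a z (f x)) \<in> borel_measurable M"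
  using measurable_compose[OF _ sol_meas0] by blast

lemma cmod_ge_g:
  assumes m: "Suc m \<le> k" "1 \<le> m"
  shows "cmod (\<Sum>j=1..k. cis (th j) * complex_of_real (sol a (Z j) x)) \<ge> sol a (Z m) x * \<bar>gfun a Z th k m x\<bar>"
proof -
  let ?S = "\<Sum>j=1..k. cis (th j) * complex_of_real (sol a (Z j) x)"
  have "Re (cis (- th (Suc m)) * ?S) = (\<Sum>j=1..k. Re (cis (- th (Suc m)) * (cis (th j) * complex_of_real (sol a (Z j) x))))"
    by (simp add: sum_distrib_left)
  also have "\<dots> = (\<Sum>j=1..k. cos (th j - th (Suc m)) * sol a (Z j) x)"
  proof (intro sum.cong refl)
    fix j
    have "cis (- th (Suc m)) * (cis (th j) * complex_of_real (sol a (Z j) x)) = cis (th j - th (Suc m)) * complex_of_real (sol a (Z j) x)"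
      by (simp add: mult.assoc[symmetric] cis_mult)
    moreover have "Re (cis (th j - th (Suc m)) * complex_of_real (sol a (Z j) x)) = cos (th j - th (Suc m)) * sol a (Z j) x"
      by simp
    ultimately show "Re (cis (- th (Suc m)) * (cis (th j) * complex_of_real (sol a (Z j) x))) = cos (th j - th (Suc m)) * sol a (Z j) x"
      by (simp only:)
  qed
  also have "\<dots> = sol a (Z m) x * gfun a Z th k m x"
    unfolding gfun_def rho_def using sol_pos[of a "Z m" x]
    by (simp add: sum_distrib_left field_simps)
  finally have e: "Re (cis (- th (Suc m)) * ?S) = sol a (Z m) x * gfun a Z th k m x" .
  have "sol a (Z m) x * \<bar>gfun a Z th k m x\<bar> = \<bar>sol a (Z m) x * gfun a Z th k m x\<bar>"
    using sol_pos[of a "Z m" x] by (simp add: abs_mult)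
  also have "\<dots> = \<bar>Re (cis (- th (Suc m)) * ?S)\<bar>" by (simp only: e)
  also have "\<dots> \<le> cmod (cis (- th (Suc m)) * ?S)" by (rule abs_Re_le_cmod)
  also have "\<dots> = cmod ?S" by (simp add: norm_mult)
  finally show ?thesis .
qed

lemma strip_x0:
  assumes a: "a \<ge> 1" and g: "gaps Z k E" and m: "1 \<le> m" "m < k"
    and LE: "2*L + 2 \<le> E" "L > 0"
    and cond: "2 powr a * exp (-a*(E-2*L)) * (4 * real k) \<le> exp (-a*(2*L)) / 2 powr a"
  shows "\<exists>x0\<in>{(Z m + Z (Suc m))/2 - L..(Z m + Z (Suc m))/2 + L}.
           \<forall>x\<in>{(Z m + Z (Suc m))/2 - L..(Z m + Z (Suc m))/2 + L}.
             \<bar>gfun a Z th k m x\<bar> \<ge> a * (exp (-a*(2*L)) / 2 powr a) / 2 * \<bar>x - x0\<bar>"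
proof (rule lin_lower)
  let ?lo = "(Z m + Z (Suc m))/2 - L" and ?hi = "(Z m + Z (Suc m))/2 + L"
  show "?lo \<le> ?hi" using LE by simp
  show "continuous_on {?lo..?hi} (gfun a Z th k m)"
    using gfun_deriv by (intro continuous_at_imp_continuous_on ballI DERIV_isCont) blast
  show "0 \<le> a * (exp (-a*(2*L)) / 2 powr a) / 2" using a by simp
  fix x y assume xy: "?lo \<le> x" "x \<le> y" "y \<le> ?hi"
  show "gfun a Z th k m y - gfun a Z th k m x \<ge> a * (exp (-a*(2*L)) / 2 powr a) / 2 * (y - x)"
  proof (rule deriv_lin[OF gfun_deriv _ xy])
    fix t assume t: "?lo \<le> t" "t \<le> ?hi"
    have "\<bar>t - (Z m + Z (Suc m))/2\<bar> \<le> L" using t by (simp add: abs_le_iff)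
    thus "gder a Z th k m t \<ge> a * (exp (-a*(2*L)) / 2 powr a) / 2"
      by (rule gder_lower[OF a g m _ LE cond])
  qed
qed

lemma epow_scale:
  assumes c: "c > 0" and t: "t \<ge> 0"
  shows "epow (c * t) b = ennreal (c powr b) * epow t b"
proof (cases "t = 0")
  case True
  have "ennreal (c powr b) \<noteq> 0" using c by simp
  thus ?thesis using True c by (simp add: epow_def ennreal_mult_top)
next
  case False
  thus ?thesis using c t by (simp add: epow_def powr_mult ennreal_mult)
qed




definition xiC :: "real \<Rightarrow> real \<Rightarrow> nat \<Rightarrow> real \<Rightarrow> real" where
  "xiC q a k L = 4 + real k * ((2 powr a * exp (-a*(-(2*L)))) powr q * (a * (exp (-a*(2*L)) / 2 powr a) / 2) powr (-q))
      * (2 * ((2*L) powr (1-q) / (1-q)))"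

lemma sol_powr_sech:
  assumes "a*(1-q) = 2"
  shows "sol a z x powr (1-q) = 1 / cosh (x - z) ^ 2"
proof -
  have "sol a z x powr (1-q) = cosh (x - z) powr (-a * (1-q))" unfolding sol_def by (simp add: powr_powr)
  also have "\<dots> = cosh (x - z) powr (-2)" using assms by simp
  also have "\<dots> = 1 / cosh (x - z) ^ 2" by (simp add: powr_minus powr_numeral divide_inverse)
  finally show ?thesis .
qed

lemma xi_core:
  fixes Z th :: "nat \<Rightarrow> real"
  assumes q: "0 < q" "q < 1" and a: "a \<ge> 1" "a*(1-q) = 2" and k: "k \<ge> 2"
    and LE: "L > 0" "2*L + 2 \<le> E"
    and domc: "2 * real k * (2 powr a * exp (-a*(2*L))) \<le> 1"
    and cond: "2 powr a * exp (-a*(E-2*L)) * (4 * real k) \<le> exp (-a*(2*L)) / 2 powr a"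
    and g: "gaps Z k E" and i: "i \<in> {1..k}"
  shows "(\<integral>\<^sup>+x. ennreal (sol a (Z i) x) * epow (cmod (\<Sum>j=1..k. cis (th j) * complex_of_real (sol a (Z j) x))) (-q) \<partial>lborel)
          \<le> ennreal (xiC q a k L)"
proof -
  define \<delta> where "\<delta> = a * (exp (-a*(2*L)) / 2 powr a) / 2"
  define C1 where "C1 = 2 powr a * exp (-a*(-(2*L)))"
  define c where "c = C1 powr q * \<delta> powr (-q)"
  define I0 where "I0 = 2 * ((2*L) powr (1-q) / (1-q))"
  define \<mu> where "\<mu> m = (Z m + Z (Suc m))/2" for m
  define S where "S x = (\<Sum>j=1..k. cis (th j) * complex_of_real (sol a (Z j) x))" for x
  have a0: "a \<ge> 0" using a by simp
  have dpos: "\<delta> > 0" unfolding \<delta>_def using a by simp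
  have C1pos: "C1 > 0" unfolding C1_def by simp
  have c0: "c \<ge> 0" unfolding c_def by simp
  have I00: "I0 \<ge> 0" unfolding I0_def using q LE by simp
  have "\<forall>m\<in>{1..<k}. \<exists>x0\<in>{\<mu> m - L..\<mu> m + L}. \<forall>x\<in>{\<mu> m - L..\<mu> m + L}. \<bar>gfun a Z th k m x\<bar> \<ge> \<delta> * \<bar>x - x0\<bar>"
    unfolding \<mu>_def \<delta>_def using strip_x0[OF a(1) g _ _ LE(2) LE(1) cond] by auto
  then obtain X0 where X0: "\<And>m. m \<in> {1..<k} \<Longrightarrow> X0 m \<in> {\<mu> m - L..\<mu> m + L}"
    "\<And>m x. m \<in> {1..<k} \<Longrightarrow> x \<in> {\<mu> m - L..\<mu> m + L} \<Longrightarrow> \<bar>gfun a Z th k m x\<bar> \<ge> \<delta> * \<bar>x - X0 m\<bar>"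
    by metis
  define F where "F x = ennreal 2 * ennreal (1 / cosh (- Z i + 1 * x) ^ 2)
     + (\<Sum>m\<in>{1..<k}. ennreal c * (indicator {\<mu> m - L..\<mu> m + L} x * epow \<bar>x - X0 m\<bar> (-q)))" for x
  have pw: "ennreal (sol a (Z i) x) * epow (cmod (S x)) (-q) \<le> F x" for x
  proof (cases "\<exists>m\<in>{1..<k}. \<bar>x - \<mu> m\<bar> \<le> L")
    case True
    then obtain m where m: "m \<in> {1..<k}" "\<bar>x - \<mu> m\<bar> \<le> L" by blast
    have m1: "1 \<le> m" "m < k" using m by auto
    note G = strip_geom[OF g m1 m(2)[unfolded \<mu>_def] LE(2) LE(1)]
    have xin: "x \<in> {\<mu> m - L..\<mu> m + L}" using m(2) by (auto simp: abs_le_iff)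
    have "ennreal (sol a (Z i) x) * epow (cmod (S x)) (-q) \<le> ennreal c * epow \<bar>x - X0 m\<bar> (-q)"
      unfolding c_def
    proof (rule strip_bound[OF q])
      show "0 \<le> sol a (Z i) x" using sol_pos[of a "Z i" x] by simp
      show "sol a (Z i) x \<le> 1" by (rule sol_le1[OF a0])
      show "sol a (Z i) x \<le> C1 * sol a (Z m) x"
        unfolding C1_def using G(3)[OF i] by (intro sol_ratio_le[OF a0]) auto
      show "0 < sol a (Z m) x" by (rule sol_pos)
      show "sol a (Z m) x * \<bar>gfun a Z th k m x\<bar> \<le> cmod (S x)"
        unfolding S_def using m1 by (intro cmod_ge_g) auto
      show "\<delta> * \<bar>x - X0 m\<bar> \<le> \<bar>gfun a Z th k m x\<bar>" using X0(2)[OF m(1) xin] .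
    qed (use dpos C1pos in auto)
    also have "\<dots> = ennreal c * (indicator {\<mu> m - L..\<mu> m + L} x * epow \<bar>x - X0 m\<bar> (-q))"
      using xin by simp
    also have "\<dots> \<le> (\<Sum>m\<in>{1..<k}. ennreal c * (indicator {\<mu> m - L..\<mu> m + L} x * epow \<bar>x - X0 m\<bar> (-q)))"
      using m(1) by (intro member_le_sum) auto
    also have "\<dots> \<le> F x" unfolding F_def by (simp add: add_increasing)
    finally show ?thesis .
  next
    case False
    have far: "\<And>m. 1 \<le> m \<Longrightarrow> m < k \<Longrightarrow> \<bar>x - (Z m + Z (Suc m))/2\<bar> \<ge> L"
    proof -
      fix m assume "1 \<le> m" "m < k"
      hence "m \<in> {1..<k}" by auto
      with False have "\<not> \<bar>x - \<mu> m\<bar> \<le> L" by blast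
      thus "\<bar>x - (Z m + Z (Suc m))/2\<bar> \<ge> L" unfolding \<mu>_def by linarith
    qed
    obtain m where m: "m \<in> {1..k}" and sep: "\<forall>j\<in>{1..k}. j \<noteq> m \<longrightarrow> \<bar>x - Z j\<bar> \<ge> \<bar>x - Z m\<bar> + 2*L"
    proof -
      have "2*L \<le> E" using LE by simp
      moreover have "k \<ge> 1" using k by simp
      ultimately show ?thesis using nearest_dom[OF g far _ LE(1)] that by blast
    qed
    define K where "K = 2 powr a * exp (-a*(2*L))"
    have K0: "K \<ge> 0" unfolding K_def by simp
    have sj: "sol a (Z j) x \<le> K * sol a (Z m) x" if "j \<in> {1..k} - {m}" for j
      unfolding K_def using sep that by (intro sol_ratio_le[OF a0]) auto
    have "(\<Sum>j\<in>{1..k}-{m}. sol a (Z j) x) \<le> (\<Sum>j\<in>{1..k}-{m}. K * sol a (Z m) x)"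
      by (intro sum_mono sj)
    also have "\<dots> = real (card ({1..k}-{m})) * (K * sol a (Z m) x)" by simp
    also have "\<dots> \<le> real k * (K * sol a (Z m) x)"
      using card_Diff1_le[of "{1..k}" m] K0 sol_pos[of a "Z m" x]
      by (intro mult_right_mono) auto
    finally have "2 * (\<Sum>j\<in>{1..k}-{m}. sol a (Z j) x) \<le> (2 * real k * K) * sol a (Z m) x" by simp
    also have "\<dots> \<le> 1 * sol a (Z m) x"
      using domc sol_pos[of a "Z m" x] unfolding K_def by (intro mult_right_mono) auto
    finally have dom: "2 * (\<Sum>j\<in>{1..k}-{m}. sol a (Z j) x) \<le> sol a (Z m) x" by simp
    have "ennreal (sol a (Z i) x) * epow (cmod (S x)) (-q) \<le> ennreal (2 * sol a (Z i) x powr (1-q))"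
      unfolding S_def
      by (rule dom_bound[where s = "\<lambda>j. sol a (Z j) x", OF _ m i _ sol_pos dom q]) (auto intro: less_imp_le sol_pos)
    also have "\<dots> = ennreal 2 * ennreal (1 / cosh (- Z i + 1 * x) ^ 2)"
    proof -
      have e: "2 * sol a (Z i) x powr (1-q) = 2 * (1 / cosh (- Z i + 1 * x) ^ 2)"
        using sol_powr_sech[OF a(2), of "Z i" x] by simp
      show ?thesis unfolding e by (rule ennreal_mult) auto
    qed
    also have "\<dots> \<le> F x" unfolding F_def by (simp add: add_increasing2)
    finally show ?thesis .
  qed
  have Fm1: "(\<lambda>x. ennreal 2 * ennreal (1 / cosh (- Z i + 1 * x) ^ 2)) \<in> borel_measurable borel" by measurable
  have Fm2: "(\<lambda>x. ennreal c * (indicator {\<mu> m - L..\<mu> m + L} x * epow \<bar>x - X0 m\<bar> (-q))) \<in> borel_measurable borel" for m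
    by measurable
  have "(\<integral>\<^sup>+x. ennreal (sol a (Z i) x) * epow (cmod (S x)) (-q) \<partial>lborel) \<le> (\<integral>\<^sup>+x. F x \<partial>lborel)"
    by (intro nn_integral_mono pw)
  also have "\<dots> = (\<integral>\<^sup>+x. ennreal 2 * ennreal (1 / cosh (- Z i + 1 * x) ^ 2) \<partial>lborel)
      + (\<Sum>m\<in>{1..<k}. \<integral>\<^sup>+x. ennreal c * (indicator {\<mu> m - L..\<mu> m + L} x * epow \<bar>x - X0 m\<bar> (-q)) \<partial>lborel)"
    unfolding F_def using Fm1 Fm2 by (simp add: nn_integral_add nn_integral_sum)
  also have "(\<integral>\<^sup>+x. ennreal 2 * ennreal (1 / cosh (- Z i + 1 * x) ^ 2) \<partial>lborel) = ennreal 4"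
  proof -
    have "(\<integral>\<^sup>+x. ennreal 2 * ennreal (1 / cosh (- Z i + 1 * x) ^ 2) \<partial>lborel)
        = ennreal 2 * (\<integral>\<^sup>+x. ennreal (1 / cosh (- Z i + 1 * x) ^ 2) \<partial>lborel)"
      by (rule nn_integral_cmult) measurable
    also have "\<dots> = ennreal 2 * ennreal (2 / 1)" using sech_int[of 1 "- Z i"] by simp
    finally show ?thesis by (simp add: ennreal_mult[symmetric])
  qed
  also have "(\<Sum>m\<in>{1..<k}. \<integral>\<^sup>+x. ennreal c * (indicator {\<mu> m - L..\<mu> m + L} x * epow \<bar>x - X0 m\<bar> (-q)) \<partial>lborel)
      \<le> (\<Sum>m\<in>{1..<k}. ennreal (c * I0))"
  proof (intro sum_mono)
    fix m assume m: "m \<in> {1..<k}"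
    have "(\<integral>\<^sup>+x. ennreal c * (indicator {\<mu> m - L..\<mu> m + L} x * epow \<bar>x - X0 m\<bar> (-q)) \<partial>lborel)
        = ennreal c * (\<integral>\<^sup>+x. indicator {\<mu> m - L..\<mu> m + L} x * epow \<bar>x - X0 m\<bar> (-q) \<partial>lborel)"
      by (rule nn_integral_cmult) measurable
    also have "(\<integral>\<^sup>+x. indicator {\<mu> m - L..\<mu> m + L} x * epow \<bar>x - X0 m\<bar> (-q) \<partial>lborel)
        \<le> (\<integral>\<^sup>+x. indicator {X0 m - 2*L..X0 m + 2*L} x * epow \<bar>x - X0 m\<bar> (-q) \<partial>lborel)"
    proof (intro nn_integral_mono mult_right_mono)
      fix x
      show "indicator {\<mu> m - L..\<mu> m + L} x \<le> (indicator {X0 m - 2*L..X0 m + 2*L} x :: ennreal)"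
        using X0(1)[OF m] by (auto simp: indicator_def)
    qed simp
    also have "\<dots> \<le> ennreal I0" unfolding I0_def by (rule sing_int[OF q]) (use LE in simp)
    finally show "(\<integral>\<^sup>+x. ennreal c * (indicator {\<mu> m - L..\<mu> m + L} x * epow \<bar>x - X0 m\<bar> (-q)) \<partial>lborel)
        \<le> ennreal (c * I0)" using c0 I00 by (simp add: ennreal_mult mult_left_mono)
  qed
  also have "(\<Sum>m\<in>{1..<k}. ennreal (c * I0)) \<le> ennreal (real k * (c * I0))"
  proof -
    have "(\<Sum>m\<in>{1..<k}. ennreal (c * I0)) = ennreal (\<Sum>m\<in>{1..<k}. c * I0)"
      by (rule sum_ennreal) (use c0 I00 in auto)
    also have "\<dots> \<le> ennreal (real k * (c * I0))"
      using c0 I00 by (intro ennreal_leI) (auto intro!: mult_right_mono)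
    finally show ?thesis .
  qed
  finally have "(\<integral>\<^sup>+x. ennreal (sol a (Z i) x) * epow (cmod (S x)) (-q) \<partial>lborel) \<le> ennreal 4 + ennreal (real k * (c * I0))"
    by (simp add: add_left_mono)
  also have "\<dots> = ennreal (4 + real k * (c * I0))"
    by (rule ennreal_plus[symmetric]) (use c0 I00 in auto)
  also have "4 + real k * (c * I0) = xiC q a k L"
    unfolding xiC_def c_def C1_def \<delta>_def I0_def by (simp add: mult.assoc)
  finally show ?thesis unfolding S_def .
qed




lemma params:
  fixes p :: real and k :: nat
  assumes p: "1 < p" "p < 2" and k: "k \<ge> 2"
  defines "a \<equiv> 2 / (p - 1)" and "L \<equiv> ln (4 * real k)" and "E \<equiv> 6 * ln (4 * real k) + ln (16 * real k) + 2"
  shows "a \<ge> 1" "a * (1 - (2 - p)) = 2" "L > 0" "2*L + 2 \<le> E"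
    "2 * real k * (2 powr a * exp (-a*(2*L))) \<le> 1"
    "2 powr a * exp (-a*(E-2*L)) * (4 * real k) \<le> exp (-a*(2*L)) / 2 powr a"
proof -
  show a1: "a \<ge> 1" unfolding a_def using p by (simp add: field_simps)
  have pn: "p - 1 \<noteq> 0" using p by simp
  show "a * (1 - (2 - p)) = 2" unfolding a_def using pn by (simp add: field_simps)
  have k4: "4 * real k > 1" using k by simp
  show L0: "L > 0" unfolding L_def using k4 by simp
  have l16: "ln (16 * real k) > 0" using k by simp
  show "2*L + 2 \<le> E" unfolding E_def L_def using L0[unfolded L_def] l16 by simp
  have eL: "exp L = 4 * real k" unfolding L_def using k by simp
  have e2L: "exp (-2*L) \<le> 1 / (4 * real k)"
  proof -
    have "exp L \<le> exp (2*L)" using L0 by simp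
    hence "4 * real k \<le> exp (2*L)" using eL by simp
    thus ?thesis using k by (simp add: exp_minus field_simps)
  qed
  define b where "b = 2 * exp (-2*L)"
  have b0: "b > 0" unfolding b_def by simp
  have b1: "b \<le> 1 / (2 * real k)" unfolding b_def using e2L by (simp add: field_simps)
  have "1 / (2 * real k) \<le> 1" using k by simp
  hence b1': "b \<le> 1" using b1 by linarith
  have bp: "b powr a = 2 powr a * exp (-a*(2*L))"
    unfolding b_def by (simp add: powr_mult exp_powr_real algebra_simps)
  have "b powr a \<le> b" using b0 b1' a1 by (intro powr_le_one_le)
  hence "2 * real k * (2 powr a * exp (-a*(2*L))) \<le> 2 * real k * (1 / (2 * real k))"
    using bp b1 k by (intro mult_left_mono) auto
  thus "2 * real k * (2 powr a * exp (-a*(2*L))) \<le> 1" using k by simp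
  define b2 where "b2 = 4 * exp (-(E - 4*L))"
  have b20: "b2 > 0" unfolding b2_def by simp
  have "exp (-(E - 4*L)) \<le> exp (- ln (16 * real k))"
    unfolding E_def L_def using L0[unfolded L_def] by simp
  also have "\<dots> = 1 / (16 * real k)" using k by (simp add: exp_minus inverse_eq_divide)
  finally have b2le: "b2 \<le> 1 / (4 * real k)" unfolding b2_def by (simp add: field_simps)
  moreover have "1 / (4 * real k) \<le> 1" using k by simp
  ultimately have b21: "b2 \<le> 1" by linarith
  have b2p: "b2 powr a = 2 powr a * 2 powr a * exp (-a*(E-4*L))"
  proof -
    have "(4::real) powr a = 2 powr a * 2 powr a"
      using powr_mult[of 2 2 a] by simp
    thus ?thesis unfolding b2_def by (simp add: powr_mult exp_powr_real algebra_simps)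
  qed
  have pa: "2 powr a > 0" by simp
  have "2 powr a * exp (-a*(E-2*L)) * (4 * real k)
      = (b2 powr a * (4 * real k)) * (exp (-a*(2*L)) / 2 powr a)"
    using pa unfolding b2p by (simp add: field_simps flip: exp_add)
  also have "\<dots> \<le> (b2 * (4 * real k)) * (exp (-a*(2*L)) / 2 powr a)"
    using powr_le_one_le[OF b20 b21 a1] k by (intro mult_right_mono) auto
  also have "\<dots> \<le> 1 * (exp (-a*(2*L)) / 2 powr a)"
    using b2le k by (intro mult_right_mono) (auto simp: field_simps)
  finally show "2 powr a * exp (-a*(E-2*L)) * (4 * real k) \<le> exp (-a*(2*L)) / 2 powr a" by simp
qed

lemma xi_lt2:
  fixes p :: real and k :: nat
  assumes p: "1 < p" "p < 2" and k: "k \<ge> 2"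
  shows "\<exists>E>0. \<exists>C>0. \<forall>(Z::nat \<Rightarrow> real) (th::nat \<Rightarrow> real).
           (\<forall>j\<in>{1..<k}. Z j < Z (Suc j) \<and> Z (Suc j) - Z j \<ge> E) \<longrightarrow>
           (\<forall>i\<in>{1..k}. (\<integral>\<^sup>+x. ennreal (sol (2/(p-1)) (Z i) x) *
               epow (cmod (\<Sum>j=1..k. cis (th j) * complex_of_real (sol (2/(p-1)) (Z j) x))) (p-2) \<partial>lborel)
             \<le> ennreal C)"
proof -
  define a where "a = 2 / (p - 1)"
  define L where "L = ln (4 * real k)"
  define E where "E = 6 * ln (4 * real k) + ln (16 * real k) + 2"
  define q where "q = 2 - p"
  note P = params[OF p k, folded a_def L_def E_def]
  have q: "0 < q" "q < 1" unfolding q_def using p by auto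
  have pq: "p - 2 = -q" unfolding q_def by simp
  have Epos: "E > 0" using P(3) P(4) by linarith
  have "xiC q a k L \<ge> 4"
  proof -
    have "0 \<le> real k * ((2 powr a * exp (-a*(-(2*L)))) powr q * (a * (exp (-a*(2*L)) / 2 powr a) / 2) powr (-q))
      * (2 * ((2*L) powr (1-q) / (1-q)))"
      using q P(1) P(3) by (intro mult_nonneg_nonneg) auto
    thus ?thesis unfolding xiC_def by linarith
  qed
  hence Cpos: "xiC q a k L > 0" by simp
  have main: "\<forall>(Z::nat \<Rightarrow> real) (th::nat \<Rightarrow> real).
           (\<forall>j\<in>{1..<k}. Z j < Z (Suc j) \<and> Z (Suc j) - Z j \<ge> E) \<longrightarrow>
           (\<forall>i\<in>{1..k}. (\<integral>\<^sup>+x. ennreal (sol (2/(p-1)) (Z i) x) *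
               epow (cmod (\<Sum>j=1..k. cis (th j) * complex_of_real (sol (2/(p-1)) (Z j) x))) (p-2) \<partial>lborel)
             \<le> ennreal (xiC q a k L))"
  proof (intro allI impI ballI)
    fix Z th :: "nat \<Rightarrow> real" and i
    assume h: "\<forall>j\<in>{1..<k}. Z j < Z (Suc j) \<and> Z (Suc j) - Z j \<ge> E" and i: "i \<in> {1..k}"
    have g: "gaps Z k E" by (rule gaps_intro[OF h]) (use Epos in simp)
    have "(\<integral>\<^sup>+x. ennreal (sol a (Z i) x) *
               epow (cmod (\<Sum>j=1..k. cis (th j) * complex_of_real (sol a (Z j) x))) (-q) \<partial>lborel)
             \<le> ennreal (xiC q a k L)"
      by (rule xi_core[OF q P(1) P(2)[folded q_def] k P(3) P(4) P(5) P(6) g i])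
    thus "(\<integral>\<^sup>+x. ennreal (sol (2/(p-1)) (Z i) x) *
               epow (cmod (\<Sum>j=1..k. cis (th j) * complex_of_real (sol (2/(p-1)) (Z j) x))) (p-2) \<partial>lborel)
             \<le> ennreal (xiC q a k L)"
      unfolding pq a_def .
  qed
  show ?thesis using main Epos Cpos by blast
qed

lemma sol_le_sech:
  assumes a: "a > 0"
  shows "sol a z x \<le> 2 powr a * (1 / cosh (- (a/2) * z + (a/2) * x) ^ 2)"
proof -
  have "sol a z x \<le> 2 powr a * exp (-a*\<bar>x-z\<bar>)" using sol_le[of a z x] a by simp
  also have "exp (-a*\<bar>x-z\<bar>) \<le> 1 / cosh (- (a/2) * z + (a/2) * x) ^ 2"
  proof -
    let ?v = "- (a/2) * z + (a/2) * x"
    have v0: "?v = (a/2) * (x - z)" by (simp add: algebra_simps)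
    have v: "\<bar>?v\<bar> = a/2 * \<bar>x - z\<bar>" unfolding v0 using a by (simp add: abs_mult)
    have "cosh ?v \<le> exp \<bar>?v\<bar>" by (rule cosh_le_exp_abs)
    hence "cosh ?v ^ 2 \<le> exp \<bar>?v\<bar> ^ 2" by (intro power_mono) auto
    also have "\<dots> = exp (a * \<bar>x - z\<bar>)" unfolding v by (simp add: power2_eq_square flip: exp_add)
    finally have "cosh ?v ^ 2 \<le> exp (a * \<bar>x - z\<bar>)" .
    hence "1 / exp (a * \<bar>x - z\<bar>) \<le> 1 / cosh ?v ^ 2" by (intro divide_left_mono) auto
    thus ?thesis by (simp add: exp_minus inverse_eq_divide)
  qed
  hence "2 powr a * exp (-a*\<bar>x-z\<bar>) \<le> 2 powr a * (1 / cosh (- (a/2) * z + (a/2) * x) ^ 2)"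
    by (intro mult_left_mono) auto
  finally show ?thesis .
qed

lemma xi_ge2:
  fixes p :: real and k :: nat
  assumes p: "2 \<le> p" and k: "k \<ge> 2"
  shows "\<exists>E>0. \<exists>C>0. \<forall>(Z::nat \<Rightarrow> real) (th::nat \<Rightarrow> real).
           (\<forall>j\<in>{1..<k}. Z j < Z (Suc j) \<and> Z (Suc j) - Z j \<ge> E) \<longrightarrow>
           (\<forall>i\<in>{1..k}. (\<integral>\<^sup>+x. ennreal (sol (2/(p-1)) (Z i) x) *
               epow (cmod (\<Sum>j=1..k. cis (th j) * complex_of_real (sol (2/(p-1)) (Z j) x))) (p-2) \<partial>lborel)
             \<le> ennreal C)"
proof -
  define a where "a = 2 / (p - 1)"
  have a0: "a > 0" unfolding a_def using p by simp
  define C where "C = real k powr (p-2) * 2 powr a * (2 / (a/2))"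
  have Cpos: "C > 0" unfolding C_def using k a0 by simp
  have main: "\<forall>(Z::nat \<Rightarrow> real) (th::nat \<Rightarrow> real).
           (\<forall>j\<in>{1..<k}. Z j < Z (Suc j) \<and> Z (Suc j) - Z j \<ge> 1) \<longrightarrow>
           (\<forall>i\<in>{1..k}. (\<integral>\<^sup>+x. ennreal (sol (2/(p-1)) (Z i) x) *
               epow (cmod (\<Sum>j=1..k. cis (th j) * complex_of_real (sol (2/(p-1)) (Z j) x))) (p-2) \<partial>lborel)
             \<le> ennreal C)"
  proof (intro allI impI ballI)
    fix Z th :: "nat \<Rightarrow> real" and i
    let ?S = "\<lambda>x. \<Sum>j=1..k. cis (th j) * complex_of_real (sol a (Z j) x)"
    have pw: "ennreal (sol a (Z i) x) * epow (cmod (?S x)) (p-2)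
        \<le> ennreal (real k powr (p-2) * 2 powr a) * ennreal (1 / cosh (- (a/2) * Z i + (a/2) * x) ^ 2)" for x
    proof -
      have "cmod (?S x) \<le> (\<Sum>j=1..k. cmod (cis (th j) * complex_of_real (sol a (Z j) x)))" by (rule norm_sum)
      also have "\<dots> = (\<Sum>j=1..k. sol a (Z j) x)"
        by (intro sum.cong refl) (simp add: norm_mult abs_of_pos sol_pos)
      also have "\<dots> \<le> (\<Sum>j=1..k. 1)" by (intro sum_mono sol_le1) (use a0 in auto)
      finally have Sk: "cmod (?S x) \<le> real k" by simp
      have e: "epow (cmod (?S x)) (p-2) \<le> ennreal (real k powr (p-2))"
      proof (cases "cmod (?S x) = 0")
        case True
        thus ?thesis using p k by (auto simp: epow_def)
      next
        case False
        thus ?thesis unfolding epow_def using Sk p by (auto intro!: ennreal_leI powr_mono2)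
      qed
      have "ennreal (sol a (Z i) x) * epow (cmod (?S x)) (p-2) \<le> ennreal (2 powr a * (1 / cosh (- (a/2) * Z i + (a/2) * x) ^ 2)) * ennreal (real k powr (p-2))"
        using e sol_le_sech[OF a0, of "Z i" x] by (intro mult_mono ennreal_leI) auto
      also have "\<dots> = ennreal (real k powr (p-2) * 2 powr a) * ennreal (1 / cosh (- (a/2) * Z i + (a/2) * x) ^ 2)"
        by (simp add: ennreal_mult[symmetric] mult_ac)
      finally show ?thesis .
    qed
    have "(\<integral>\<^sup>+x. ennreal (sol a (Z i) x) * epow (cmod (?S x)) (p-2) \<partial>lborel)
       \<le> (\<integral>\<^sup>+x. ennreal (real k powr (p-2) * 2 powr a) * ennreal (1 / cosh (- (a/2) * Z i + (a/2) * x) ^ 2) \<partial>lborel)"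
      by (intro nn_integral_mono pw)
    also have "\<dots> = ennreal (real k powr (p-2) * 2 powr a) * (\<integral>\<^sup>+x. ennreal (1 / cosh (- (a/2) * Z i + (a/2) * x) ^ 2) \<partial>lborel)"
      by (rule nn_integral_cmult) measurable
    also have "\<dots> = ennreal (real k powr (p-2) * 2 powr a) * ennreal (2 / (a/2))"
      using sech_int[of "a/2" "- (a/2) * Z i"] a0 by simp
    also have "\<dots> = ennreal (real k powr (p-2) * 2 powr a * (2 / (a/2)))"
      by (rule ennreal_mult[symmetric]) (use a0 in auto)
    also have "\<dots> = ennreal C" unfolding C_def ..
    finally show "(\<integral>\<^sup>+x. ennreal (sol (2/(p-1)) (Z i) x) *
               epow (cmod (\<Sum>j=1..k. cis (th j) * complex_of_real (sol (2/(p-1)) (Z j) x))) (p-2) \<partial>lborel)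
             \<le> ennreal C" unfolding a_def .
  qed
  show ?thesis using main Cpos by (intro exI[of _ "1::real"]) auto
qed

lemma kappa0_pos: "p > 1 \<Longrightarrow> kappa0 p > 0"
  unfolding kappa0_def by simp

lemma kappa_meas[measurable]: "(\<lambda>y. kappa p d y) \<in> borel_measurable borel"
  unfolding kappa_def by measurable

lemma kappa_tanh:
  assumes p: "p > 1"
  shows "kappa p (- tanh z) (tanh x) = kappa0 p * cosh x powr (2/(p-1)) * sol (2/(p-1)) z x"
proof -
  have h1: "1 - (- tanh z)^2 = 1 / cosh z ^ 2" using one_minus_tanh_sq[of z] by simp
  have h2: "1 + (- tanh z) * tanh x = cosh (x - z) / (cosh x * cosh z)"
    unfolding tanh_def cosh_diff by (simp add: field_simps)
  have A: "(1 / cosh z ^ 2) powr (1/(p-1)) = exp (1/(p-1) * (- (2 * ln (cosh z))))"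
    by (simp add: powr_def ln_div ln_realpow)
  have B: "(cosh (x - z) / (cosh x * cosh z)) powr (-2/(p-1))
      = exp (-2/(p-1) * (ln (cosh (x - z)) - (ln (cosh x) + ln (cosh z))))"
    by (simp add: powr_def ln_div ln_mult)
  have C: "cosh x powr (2/(p-1)) = exp (2/(p-1) * ln (cosh x))" by (simp add: powr_def)
  have D: "cosh (x - z) powr (- (2/(p-1))) = exp (- (2/(p-1)) * ln (cosh (x - z)))" by (simp add: powr_def)
  have E: "exp (1/(p-1) * (- (2 * ln (cosh z)))) * exp (-2/(p-1) * (ln (cosh (x - z)) - (ln (cosh x) + ln (cosh z))))
      = exp (2/(p-1) * ln (cosh x)) * exp (- (2/(p-1)) * ln (cosh (x - z)))"
  proof -
    have pn: "p - 1 \<noteq> 0" using p by simp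
    show ?thesis unfolding exp_add[symmetric] using pn by (simp add: field_simps)
  qed
  show ?thesis unfolding kappa_def sol_def h1 h2 A B C D
    using E by (simp add: mult.assoc)
qed

lemma K_tanh:
  assumes p: "p > 1"
  shows "(\<Sum>j=1..k. cis (th j) * complex_of_real (kappa p (- tanh (Z j)) (tanh x)))
       = complex_of_real (kappa0 p * cosh x powr (2/(p-1))) * (\<Sum>j=1..k. cis (th j) * complex_of_real (sol (2/(p-1)) (Z j) x))"
  unfolding kappa_tanh[OF p] sum_distrib_left by (intro sum.cong refl) (simp add: mult_ac)

lemma integrand_tanh:
  assumes p: "p > 1"
  defines "a \<equiv> 2/(p-1)"
  shows "ennreal (kappa p (- tanh (Z i)) (tanh x)) *
           epow (cmod (\<Sum>j=1..k. cis (th j) * complex_of_real (kappa p (- tanh (Z j)) (tanh x)))) (p - 2)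
         * ennreal (1 - tanh x ^ 2)
       = ennreal (kappa0 p powr (p-1)) * (ennreal (sol a (Z i) x) *
           epow (cmod (\<Sum>j=1..k. cis (th j) * complex_of_real (sol a (Z j) x))) (p-2))"
proof -
  define w where "w = kappa0 p * cosh x powr a"
  define S where "S = (\<Sum>j=1..k. cis (th j) * complex_of_real (sol a (Z j) x))"
  have w0: "w > 0" unfolding w_def using kappa0_pos[OF p] by simp
  have k1: "kappa p (- tanh (Z i)) (tanh x) = w * sol a (Z i) x"
    unfolding w_def a_def kappa_tanh[OF p] by simp
  have k2: "cmod (\<Sum>j=1..k. cis (th j) * complex_of_real (kappa p (- tanh (Z j)) (tanh x))) = w * cmod S"
    unfolding K_tanh[OF p] S_def w_def a_def using w0[unfolded w_def a_def] kappa0_pos[OF p] by (simp add: norm_mult)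
  have ep: "epow (w * cmod S) (p-2) = ennreal (w powr (p-2)) * epow (cmod S) (p-2)"
    by (rule epow_scale[OF w0]) simp
  have r: "w * sol a (Z i) x * w powr (p-2) * (1 - tanh x ^ 2) = kappa0 p powr (p-1) * sol a (Z i) x"
  proof -
    have "w powr (p-1) = w powr (1 + (p-2))" by simp
    also have "\<dots> = w powr 1 * w powr (p-2)" by (rule powr_add)
    also have "\<dots> = w * w powr (p-2)" using w0 by simp
    finally have "w * w powr (p-2) = w powr (p-1)" by simp
    also have "\<dots> = kappa0 p powr (p-1) * (cosh x powr a) powr (p-1)"
      unfolding w_def using kappa0_pos[OF p] by (simp add: powr_mult)
    also have "(cosh x powr a) powr (p-1) = cosh x ^ 2"
    proof -
      have pn: "p - 1 \<noteq> 0" using p by simp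
      have "a * (p - 1) = 2" unfolding a_def using pn by (simp add: field_simps)
      thus ?thesis by (simp add: powr_powr)
    qed
    finally have W: "w * w powr (p-2) = kappa0 p powr (p-1) * cosh x ^ 2" .
    have T: "1 - tanh x ^ 2 = 1 / cosh x ^ 2" by (rule one_minus_tanh_sq)
    have "w * sol a (Z i) x * w powr (p-2) * (1 - tanh x ^ 2)
       = (w * w powr (p-2)) * sol a (Z i) x * (1 - tanh x ^ 2)" by (simp only: mult_ac)
    also have "\<dots> = (kappa0 p powr (p-1) * cosh x ^ 2) * sol a (Z i) x * (1 / cosh x ^ 2)"
      by (simp only: W T)
    also have "\<dots> = kappa0 p powr (p-1) * sol a (Z i) x" by (simp add: field_simps)
    finally show ?thesis .
  qed
  have nn: "w * sol a (Z i) x \<ge> 0" "w powr (p-2) \<ge> 0" "1 - tanh x ^ 2 \<ge> 0"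
    using w0 sol_pos[of a "Z i" x] one_minus_tanh_sq[of x] by auto
  have "ennreal (w * sol a (Z i) x) * (ennreal (w powr (p-2)) * epow (cmod S) (p-2)) * ennreal (1 - tanh x ^ 2)
      = ennreal (w * sol a (Z i) x * w powr (p-2) * (1 - tanh x ^ 2)) * epow (cmod S) (p-2)"
  proof -
    have AB: "w * sol a (Z i) x * w powr (p-2) \<ge> 0" using nn by simp
    have e1: "ennreal (w * sol a (Z i) x * w powr (p-2) * (1 - tanh x ^ 2))
       = ennreal (w * sol a (Z i) x * w powr (p-2)) * ennreal (1 - tanh x ^ 2)"
      by (rule ennreal_mult[OF AB nn(3)])
    have e2: "ennreal (w * sol a (Z i) x * w powr (p-2)) = ennreal (w * sol a (Z i) x) * ennreal (w powr (p-2))"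
      by (rule ennreal_mult[OF nn(1) nn(2)])
    show ?thesis unfolding e1 e2 by (simp only: mult_ac)
  qed
  also have "\<dots> = ennreal (kappa0 p powr (p-1) * sol a (Z i) x) * epow (cmod S) (p-2)" by (simp only: r)
  also have "\<dots> = ennreal (kappa0 p powr (p-1)) * (ennreal (sol a (Z i) x) * epow (cmod S) (p-2))"
    using sol_pos[of a "Z i" x] by (simp add: ennreal_mult mult_ac)
  finally show ?thesis unfolding k1 k2 ep by (simp only: S_def)
qed

theorem mainTheorem6:
  fixes p :: real and k :: nat
  assumes "p > 1" and "k \<ge> 2"
  shows "\<exists>E>0. \<exists>C>0. \<forall>(\<zeta>::nat \<Rightarrow> real) (\<theta>::nat \<Rightarrow> real).
           (\<forall>j\<in>{1..<k}. \<zeta> j < \<zeta> (Suc j) \<and> \<zeta> (Suc j) - \<zeta> j \<ge> E) \<longrightarrow>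
           (\<forall>i\<in>{1..k}.
              (\<integral>\<^sup>+ y. indicator {-1<..<1} y * ennreal (kappa p (- tanh (\<zeta> i)) y)
                   * epow (cmod (\<Sum>j=1..k. cis (\<theta> j) * complex_of_real (kappa p (- tanh (\<zeta> j)) y))) (p - 2)
                 \<partial>lborel) \<le> ennreal C)"
proof -
  have p: "p > 1" and k: "k \<ge> 2" using assms by auto
  define a where "a = 2 / (p - 1)"
  have "\<exists>E>0. \<exists>C>0. \<forall>(Z::nat \<Rightarrow> real) (th::nat \<Rightarrow> real).
           (\<forall>j\<in>{1..<k}. Z j < Z (Suc j) \<and> Z (Suc j) - Z j \<ge> E) \<longrightarrow>
           (\<forall>i\<in>{1..k}. (\<integral>\<^sup>+x. ennreal (sol (2/(p-1)) (Z i) x) *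
               epow (cmod (\<Sum>j=1..k. cis (th j) * complex_of_real (sol (2/(p-1)) (Z j) x))) (p-2) \<partial>lborel)
             \<le> ennreal C)"
  proof (cases "p < 2")
    case True thus ?thesis using xi_lt2[OF p True k] by blast
  next
    case False thus ?thesis using xi_ge2[of p k] k by simp
  qed
  then obtain E C where E: "E > 0" and C: "C > 0" and H: "\<And>Z th. (\<forall>j\<in>{1..<k}. Z j < Z (Suc j) \<and> Z (Suc j) - Z j \<ge> E) \<Longrightarrow>
           (\<forall>i\<in>{1..k}. (\<integral>\<^sup>+x. ennreal (sol (2/(p-1)) (Z i) x) *
               epow (cmod (\<Sum>j=1..k. cis (th j) * complex_of_real (sol (2/(p-1)) (Z j) x))) (p-2) \<partial>lborel)
             \<le> ennreal C)"
    by blast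
  define C' where "C' = kappa0 p powr (p-1) * C"
  have C': "C' > 0" unfolding C'_def using kappa0_pos[OF p] C by simp
  have main: "\<forall>(\<zeta>::nat \<Rightarrow> real) (\<theta>::nat \<Rightarrow> real).
           (\<forall>j\<in>{1..<k}. \<zeta> j < \<zeta> (Suc j) \<and> \<zeta> (Suc j) - \<zeta> j \<ge> E) \<longrightarrow>
           (\<forall>i\<in>{1..k}.
              (\<integral>\<^sup>+ y. indicator {-1<..<1} y * ennreal (kappa p (- tanh (\<zeta> i)) y)
                   * epow (cmod (\<Sum>j=1..k. cis (\<theta> j) * complex_of_real (kappa p (- tanh (\<zeta> j)) y))) (p - 2)
                 \<partial>lborel) \<le> ennreal C')"
  proof (intro allI impI ballI)
    fix Z th :: "nat \<Rightarrow> real" and i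
    assume h: "\<forall>j\<in>{1..<k}. Z j < Z (Suc j) \<and> Z (Suc j) - Z j \<ge> E" and i: "i \<in> {1..k}"
    define f where "f y = ennreal (kappa p (- tanh (Z i)) y)
                   * epow (cmod (\<Sum>j=1..k. cis (th j) * complex_of_real (kappa p (- tanh (Z j)) y))) (p - 2)" for y
    have fm: "f \<in> borel_measurable borel" unfolding f_def by measurable
    have "(\<integral>\<^sup>+ y. indicator {-1<..<1} y * ennreal (kappa p (- tanh (Z i)) y)
                   * epow (cmod (\<Sum>j=1..k. cis (th j) * complex_of_real (kappa p (- tanh (Z j)) y))) (p - 2)
                 \<partial>lborel) = (\<integral>\<^sup>+ y. indicator {-1<..<1} y * f y \<partial>lborel)"
      unfolding f_def by (simp add: mult.assoc)
    also have "\<dots> = (\<integral>\<^sup>+x. f (tanh x) * ennreal (1 - tanh x ^ 2) \<partial>lborel)"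
      by (rule subst_tanh[OF fm])
    also have "\<dots> = (\<integral>\<^sup>+x. ennreal (kappa0 p powr (p-1)) * (ennreal (sol (2/(p-1)) (Z i) x) *
           epow (cmod (\<Sum>j=1..k. cis (th j) * complex_of_real (sol (2/(p-1)) (Z j) x))) (p-2)) \<partial>lborel)"
      unfolding f_def by (rule nn_integral_cong) (rule integrand_tanh[OF p])
    also have "\<dots> = ennreal (kappa0 p powr (p-1)) * (\<integral>\<^sup>+x. ennreal (sol (2/(p-1)) (Z i) x) *
           epow (cmod (\<Sum>j=1..k. cis (th j) * complex_of_real (sol (2/(p-1)) (Z j) x))) (p-2) \<partial>lborel)"
      by (rule nn_integral_cmult) measurable
    also have "\<dots> \<le> ennreal (kappa0 p powr (p-1)) * ennreal C"
      using H[OF h] i by (intro mult_left_mono) auto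
    also have "\<dots> = ennreal C'" unfolding C'_def using C by (simp add: ennreal_mult)
    finally show "(\<integral>\<^sup>+ y. indicator {-1<..<1} y * ennreal (kappa p (- tanh (Z i)) y)
                   * epow (cmod (\<Sum>j=1..k. cis (th j) * complex_of_real (kappa p (- tanh (Z j)) y))) (p - 2)
                 \<partial>lborel) \<le> ennreal C'" .
  qed
  show ?thesis using main E C' by blast
qed


end
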